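(* Let $\mathcal{M}$ be the set of all marked overpartitions. There is a bijection $\Phi:\mathcal{M}\to\overline{SP}$ which preserves weight (if $(\pi,j)$ is a marked overpartition of $n$ then $|\Phi(\pi,j)|=n$) and satisfies, for every $(\pi,j)\in\mathcal M$ with $\vec\lambda=\Phi(\pi,j)$, \[ \bar k(\pi,j)=k(\vec\lambda)\qquad\text{and}\qquad\overline{\mathrm{sptcrank}}(\pi,j)=\overline{\mathrm{crank}}(\vec\lambda). \]
   Context: For a partition $\lambda$, $s(\lambda)$ is its smallest part ($s(\emptyset)=\infty$) and $|\lambda|$ its sum. Marked overpartitions: an overpartition of $n$ is a partition of $n$ in which the first occurrence of each part size may be overlined; a marked overpartition of $n$ is a pair $(\pi,j)$ where $\pi$ is an overpartition of $n$ whose smallest part is not overlined and $1\le j\le\nu(\pi)$, $\nu(\pi)$ the number of occurrences of the smallest part. Let $\pi_1$ be the partition of non-overlined parts and $\pi_2$ the partition (into distinct parts) of overlined parts. For a positive integer $m=b(m)2^{j(m)}$ with $b(m)$ odd and integers $m\ge n+1$, let $j_0(m,n)$ be the least nonnegative $j_0$ with $b(m)2^{j_0}\ge n+1$; $k(m,n)=0$ if $b(m)\ge2n$, $k(m,n)=2^{j(m)-j_0(m,n)}$ if $b(m)2^{j_0(m,n)}<2n$, $k(m,n)=0$ if $b(m)2^{j_0(m,n)}=2n$; and $k(\rho,n)=\sum_{m\in\rho}k(m,n)$ for $\rho$ into distinct parts $\ge n+1$. Set $\bar k(\pi,j)=\nu(\pi_1)-j+k(\pi_2,s(\pi_1))$,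 and $\overline{\mathrm{sptcrank}}(\pi,j)$ = (number of parts of $\pi_1$ that are $\ge s(\pi_1)+\bar k$) $-\bar k$ if $\bar k>0$, = (number of parts of $\pi_1$) $-1$ if $\bar k=0$. $\overline{SP}$ is the set of pairs $\vec\lambda=(\lambda_1,\lambda_2)$ of partitions with $0<s(\lambda_1)\le s(\lambda_2)$ such that every part of $\lambda_2$ that is $\ge2s(\lambda_1)+1$ is odd; $|\vec\lambda|=|\lambda_1|+|\lambda_2|$. $k(\vec\lambda)$ is the number of parts $j$ of $\lambda_2$ (with multiplicity) with $s(\lambda_1)\le j\le2s(\lambda_1)-1$; with $k=k(\vec\lambda)$, $\overline{\mathrm{crank}}(\vec\lambda)$ = (number of parts of $\lambda_1$ that are $\ge s(\lambda_1)+k$) $-k$ if $k>0$, = (number of parts of $\lambda_1$) $-1$ if $k=0$. *)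

theory Defs
  imports "HOL-Library.Multiset" "HOL-Computational_Algebra.Primes"
begin

definition is_partition :: "nat multiset \<Rightarrow> bool" where
  "is_partition lam \<longleftrightarrow> (\<forall>x\<in>#lam. 0 < x)"

definition spart :: "nat multiset \<Rightarrow> nat" where
  "spart lam = Min (set_mset lam)"

text \<open>A marked overpartition is encoded as a triple (pi1, pi2, j): pi1 is the
partition of non-overlined parts, pi2 the (finite) set of overlined parts (distinct),
and j the mark. The smallest part of pi is not overlined: pi1 is nonempty and every
overlined part exceeds the smallest non-overlined part.\<close>

type_synonym marked_op = "nat multiset \<times> nat set \<times> nat"

definition marked_overpartitions :: "marked_op set" where
  "marked_overpartitions =
     {(p1, p2, j). is_partition p1 \<and> p1 \<noteq> {#} \<and> finite p2 \<and>
        (\<forall>x\<in>p2. spart p1 < x) \<and> 1 \<le> j \<and> j \<le> count p1 (spart p1)}"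

definition mop_weight :: "marked_op \<Rightarrow> nat" where
  "mop_weight x = (case x of (p1, p2, j) \<Rightarrow> sum_mset p1 + \<Sum>p2)"

text \<open>m = b(m) 2^j(m) with b(m) odd.\<close>

definition jpow :: "nat \<Rightarrow> nat" where
  "jpow m = multiplicity (2::nat) m"

definition bodd :: "nat \<Rightarrow> nat" where
  "bodd m = m div 2 ^ jpow m"

definition j0 :: "nat \<Rightarrow> nat \<Rightarrow> nat" where
  "j0 m n = (LEAST j. bodd m * 2 ^ j \<ge> n + 1)"

definition kpart :: "nat \<Rightarrow> nat \<Rightarrow> nat" where
  "kpart m n =
     (if bodd m \<ge> 2 * n then 0
      else if bodd m * 2 ^ j0 m n < 2 * n then 2 ^ (jpow m - j0 m n)
      else 0)"

definition kset :: "nat set \<Rightarrow> nat \<Rightarrow> nat" where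
  "kset rho n = (\<Sum>m\<in>rho. kpart m n)"

definition kbar :: "marked_op \<Rightarrow> nat" where
  "kbar x = (case x of (p1, p2, j) \<Rightarrow>
      count p1 (spart p1) - j + kset p2 (spart p1))"

definition sptcrank :: "marked_op \<Rightarrow> int" where
  "sptcrank x = (case x of (p1, p2, j) \<Rightarrow>
      (let k = kbar x in
       if k > 0 then int (size (filter_mset (\<lambda>y. spart p1 + k \<le> y) p1)) - int k
       else int (size p1) - 1))"

definition SPbar :: "(nat multiset \<times> nat multiset) set" where
  "SPbar = {(l1, l2). is_partition l1 \<and> is_partition l2 \<and> l1 \<noteq> {#} \<and>
       (\<forall>y\<in>#l2. spart l1 \<le> y) \<and>
       (\<forall>y\<in>#l2. y \<ge> 2 * spart l1 + 1 \<longrightarrow> odd y)}"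

definition sp_weight :: "nat multiset \<times> nat multiset \<Rightarrow> nat" where
  "sp_weight l = sum_mset (fst l) + sum_mset (snd l)"

definition ksp :: "nat multiset \<times> nat multiset \<Rightarrow> nat" where
  "ksp l = size (filter_mset (\<lambda>y. spart (fst l) \<le> y \<and> y \<le> 2 * spart (fst l) - 1) (snd l))"

definition crank_bar :: "nat multiset \<times> nat multiset \<Rightarrow> int" where
  "crank_bar l =
     (let k = ksp l; l1 = fst l in
      if k > 0 then int (size (filter_mset (\<lambda>y. spart l1 + k \<le> y) l1)) - int k
      else int (size l1) - 1)"

end

theory Submission
  imports Defs
begin


lemma bj_char:
  assumes "odd b" shows "jpow (b*2^k) = k \<and> bodd (b*2^k) = b"
proof -
  have p: "prime_elem (2::nat)" by simp
  have nd: "\<not> (2::nat) dvd b" using assms by simp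
  have "multiplicity 2 (b*2^k) = multiplicity (2::nat) (2^k)"
    using multiplicity_prime_elem_times_other[OF p nd] by simp
  also have "\<dots> = k" by (simp add: multiplicity_prime_power)
  finally have j: "jpow (b*2^k) = k" by (simp add: jpow_def)
  then show ?thesis by (simp add: bodd_def)
qed

lemma odd_decomp: "(m::nat) > 0 \<Longrightarrow> \<exists>b k. odd b \<and> m = b*2^k"
proof (induction m rule: less_induct)
  case (less m)
  show ?case
  proof (cases "odd m")
    case True then show ?thesis by (intro exI[of _ m] exI[of _ 0]) simp
  next
    case False
    then have "m div 2 < m" "m div 2 > 0" using less.prems by auto
    with less.IH obtain b k where "odd b" "m div 2 = b*2^k" by blast
    then show ?thesis using False by (intro exI[of _ b] exI[of _ "Suc k"]) auto
  qed
qed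

definition base :: "nat \<Rightarrow> nat \<Rightarrow> nat" where "base s m = bodd m * 2 ^ j0 m s"
definition ex :: "nat \<Rightarrow> nat \<Rightarrow> nat" where "ex s m = jpow m - j0 m s"
definition G :: "nat \<Rightarrow> nat \<Rightarrow> bool" where "G s p \<longleftrightarrow> s + 1 \<le> p \<and> (p \<le> 2*s \<or> odd p)"

lemma base_char:
  assumes "G s p" shows "base s (p*2^t) = p \<and> ex s (p*2^t) = t"
proof -
  have "p > 0" using assms by (auto simp: G_def)
  then obtain b i where b: "odd b" "p = b*2^i" using odd_decomp by blast
  have m: "p*2^t = b*2^(i+t)" using b by (simp add: power_add)
  have bj: "jpow (p*2^t) = i+t" "bodd (p*2^t) = b" using bj_char[OF b(1)] m by auto
  have j0: "j0 (p*2^t) s = i"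
    unfolding j0_def bj
  proof (rule Least_equality)
    show "s + 1 \<le> b * 2 ^ i" using assms b by (simp add: G_def)
  next
    fix j assume j: "s + 1 \<le> b*2^j"
    show "i \<le> j"
    proof (rule ccontr)
      assume "\<not> i \<le> j"
      then have "j < i" by simp
      then obtain i' where i': "i = Suc i'" "j \<le> i'" by (cases i) auto
      then have "even p" using b by simp
      then have "p \<le> 2*s" using assms by (auto simp: G_def)
      then have "b*2^i' \<le> s" using b i' by simp
      moreover have "b*2^j \<le> b*2^i'" using i' by simp
      ultimately show False using j by simp
    qed
  qed
  show ?thesis unfolding base_def ex_def using bj j0 b by simp
qed

lemma base_exists:
  assumes "s \<ge> 1" "m \<ge> s + 1"
  shows "G s (base s m) \<and> m = base s m * 2 ^ ex s m"
proof -
  obtain b k where b: "odd b" "m = b*2^k" using odd_decomp assms by (metis add_pos_pos less_le_trans less_numeral_extra(1) linorder_not_le not_one_le_zero)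
  have bj: "jpow m = k" "bodd m = b" using bj_char[OF b(1)] b by auto
  have ex1: "s + 1 \<le> b*2^k" using assms b by simp
  have L: "s + 1 \<le> b*2^(j0 m s)" unfolding j0_def bj by (rule LeastI[of _ k], rule ex1)
  have le: "j0 m s \<le> k" unfolding j0_def bj by (rule Least_le, rule ex1)
  have eq: "m = base s m * 2 ^ ex s m"
    unfolding base_def ex_def bj using le b by (simp add: mult.assoc flip: power_add)
  have "base s m \<le> 2*s \<or> odd (base s m)"
  proof (cases "j0 m s")
    case 0 then show ?thesis using b(1) bj(2) by (simp add: base_def)
  next
    case (Suc j')
    have "\<not> s + 1 \<le> b*2^j'" unfolding bj[symmetric]
      using not_less_Least[of j' "\<lambda>j. s+1 \<le> bodd m * 2^j"] Suc unfolding j0_def by simp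
    then show ?thesis using Suc by (simp add: base_def bj)
  qed
  then show ?thesis using L eq bj(2) by (simp add: G_def base_def)
qed

lemma kpart_char:
  assumes "s \<ge> 1" "m \<ge> s + 1"
  shows "kpart m s = (if base s m < 2*s then 2 ^ ex s m else 0)"
proof (cases "bodd m \<ge> 2*s")
  case True
  have "j0 m s = 0" unfolding j0_def using True assms by (intro Least_equality) auto
  then show ?thesis using True by (simp add: kpart_def base_def)
next
  case False then show ?thesis by (simp add: kpart_def base_def ex_def)
qed



lemma sum_pow_split:
  assumes "finite (T::nat set)"
  shows "(\<Sum>t\<in>T. (2::nat)^t) = (if 0 \<in> T then 1 else 0) + 2 * (\<Sum>t\<in>{t. Suc t \<in> T}. 2^t)"
proof -
  have T: "T = (T \<inter> {0}) \<union> Suc ` {t. Suc t \<in> T}"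
    by (auto simp: image_iff) (metis not0_implies_Suc)
  have fin: "finite {t. Suc t \<in> T}"
    using assms by (metis finite_vimageI inj_Suc vimage_def)
  have "(\<Sum>t\<in>T. (2::nat)^t) = (\<Sum>t\<in>T \<inter> {0}. 2^t) + (\<Sum>t\<in>Suc ` {t. Suc t \<in> T}. 2^t)"
    by (subst T, rule sum.union_disjoint) (use assms fin in auto)
  also have "(\<Sum>t\<in>Suc ` {t. Suc t \<in> T}. (2::nat)^t) = (\<Sum>t\<in>{t. Suc t \<in> T}. 2^Suc t)"
    by (simp add: sum.reindex)
  also have "\<dots> = 2 * (\<Sum>t\<in>{t. Suc t \<in> T}. 2^t)" by (simp add: sum_distrib_left)
  also have "(\<Sum>t\<in>T \<inter> {0}. (2::nat)^t) = (if 0 \<in> T then 1 else 0)" by auto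
  finally show ?thesis .
qed

lemma bit_sum_pow:
  "finite T \<Longrightarrow> bit (\<Sum>t\<in>T. (2::nat)^t) n \<longleftrightarrow> n \<in> T"
proof (induction n arbitrary: T)
  case 0
  then show ?case by (subst sum_pow_split) (auto simp: bit_0)
next
  case (Suc n)
  have fin: "finite {t. Suc t \<in> T}"
    using Suc.prems by (metis finite_vimageI inj_Suc vimage_def)
  have "bit (\<Sum>t\<in>T. (2::nat)^t) (Suc n) \<longleftrightarrow> bit ((\<Sum>t\<in>T. (2::nat)^t) div 2) n"
    by (simp add: bit_Suc)
  also have "(\<Sum>t\<in>T. (2::nat)^t) div 2 = (\<Sum>t\<in>{t. Suc t \<in> T}. 2^t)"
    by (subst sum_pow_split[OF Suc.prems]) auto
  finally show ?case using Suc.IH[OF fin] by simp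
qed

lemma bits_finite: "finite {t. bit (c::nat) t}"
proof -
  have "{t. bit c t} \<subseteq> {..<c}"
  proof
    fix t assume "t \<in> {t. bit c t}"
    then have "odd (c div 2^t)" by (simp add: bit_iff_odd)
    then have "c div 2^t \<ge> 1" by (cases "c div 2^t") auto
    then have "2^t \<le> c" by (metis div_less leD less_one not_le)
    then show "t \<in> {..<c}" using less_le_trans[OF less_exp[of t]] by simp
  qed
  then show ?thesis using finite_subset by blast
qed

lemma sum_bits: "(\<Sum>t | bit (c::nat) t. 2^t) = c"
proof (induction c rule: less_induct)
  case (less c)
  show ?case
  proof (cases "c = 0")
    case True then show ?thesis by simp
  next
    case False
    have "(\<Sum>t | bit c t. (2::nat)^t) = (if 0 \<in> {t. bit c t} then 1 else 0) + 2 * (\<Sum>t\<in>{t. Suc t \<in> {t. bit c t}}. 2^t)"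
      by (rule sum_pow_split[OF bits_finite])
    also have "{t. Suc t \<in> {t. bit c t}} = {t. bit (c div 2) t}" by (simp add: bit_Suc)
    also have "(\<Sum>t\<in>{t. bit (c div 2) t}. (2::nat)^t) = c div 2" using less.IH False by simp
    finally show ?thesis by (simp add: bit_0)
  qed
qed

lemma sum_mset_sum: "sum_mset (\<Sum>m\<in>A. (f m :: nat multiset)) = (\<Sum>m\<in>A. sum_mset (f m))"
  by (induction A rule: infinite_finite_induct) auto

lemma filter_sum: "filter_mset P (\<Sum>m\<in>A. (f m :: 'a multiset)) = (\<Sum>m\<in>A. filter_mset P (f m))"
  by (induction A rule: infinite_finite_induct) auto

lemma size_sum: "size (\<Sum>m\<in>A. (f m :: 'a multiset)) = (\<Sum>m\<in>A. size (f m))"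
  by (induction A rule: infinite_finite_induct) auto



lemma spart_props:
  assumes "is_partition p" "p \<noteq> {#}"
  shows "spart p \<in># p" "\<And>y. y \<in># p \<Longrightarrow> spart p \<le> y" "spart p \<ge> 1"
proof -
  have f: "finite (set_mset p)" "set_mset p \<noteq> {}" using assms by auto
  show "spart p \<in># p" unfolding spart_def using Min_in[OF f] by simp
  show "\<And>y. y \<in># p \<Longrightarrow> spart p \<le> y" unfolding spart_def using f by simp
  then show "spart p \<ge> 1" using assms \<open>spart p \<in># p\<close> unfolding is_partition_def
    by (simp add: Suc_le_eq)
qed

lemma spart_eqI: "s \<in># p \<Longrightarrow> (\<And>y. y \<in># p \<Longrightarrow> s \<le> y) \<Longrightarrow> spart p = s"
  unfolding spart_def by (intro Min_eqI) auto

definition S :: "nat \<Rightarrow> nat set \<Rightarrow> nat multiset" where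
  "S s A = (\<Sum>m\<in>A. replicate_mset (2 ^ ex s m) (base s m))"

definition Phi :: "marked_op \<Rightarrow> nat multiset \<times> nat multiset" where
  "Phi x = (case x of (p1,p2,j) \<Rightarrow>
     (p1 - replicate_mset (count p1 (spart p1) - j) (spart p1),
      replicate_mset (count p1 (spart p1) - j) (spart p1) + S (spart p1) p2))"

definition Psi :: "nat multiset \<times> nat multiset \<Rightarrow> marked_op" where
  "Psi l = (case l of (l1,l2) \<Rightarrow>
     (l1 + replicate_mset (count l2 (spart l1)) (spart l1),
      {m. spart l1 < m \<and> bit (count l2 (base (spart l1) m)) (ex (spart l1) m)},
      count l1 (spart l1)))"

lemma in_S: "y \<in># S s A \<Longrightarrow> \<exists>m\<in>A. y = base s m"
proof (rule ccontr)
  assume y: "y \<in># S s A" and "\<not> (\<exists>m\<in>A. y = base s m)"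
  then have "\<forall>m\<in>A. count (replicate_mset (2 ^ ex s m) (base s m)) y = 0" by auto
  then have "count (S s A) y = 0" unfolding S_def count_sum by simp
  then show False using y by (metis count_eq_zero_iff)
qed

lemma count_S:
  assumes "s \<ge> 1" "finite A" "\<forall>m\<in>A. s < m"
  shows "count (S s A) y = (\<Sum>t \<in> ex s ` {m\<in>A. base s m = y}. 2^t)"
proof -
  have "count (S s A) y = (\<Sum>m\<in>A. if base s m = y then 2 ^ ex s m else 0)"
    unfolding S_def count_sum by (intro sum.cong) auto
  also have "\<dots> = (\<Sum>m\<in>{m\<in>A. base s m = y}. 2 ^ ex s m)"
    using assms(2) by (simp add: sum.inter_filter)
  also have "\<dots> = (\<Sum>t \<in> ex s ` {m\<in>A. base s m = y}. 2^t)"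
  proof (rule sum.reindex[symmetric, unfolded comp_def])
    show "inj_on (ex s) {m \<in> A. base s m = y}"
    proof (rule inj_onI)
      fix a b assume a: "a \<in> {m \<in> A. base s m = y}" and b: "b \<in> {m \<in> A. base s m = y}"
        and e: "ex s a = ex s b"
      have "a = base s a * 2 ^ ex s a" using base_exists[of s a] assms a by auto
      moreover have "b = base s b * 2 ^ ex s b" using base_exists[of s b] assms b by auto
      ultimately show "a = b" using a b e by simp
    qed
  qed
  finally show ?thesis .
qed



lemma filter_rep: "filter_mset P (replicate_mset n x) = (if P x then replicate_mset n x else {#})"
  by (induction n) auto

context
  fixes p1 :: "nat multiset" and p2 :: "nat set" and j :: nat
  assumes mop: "(p1,p2,j) \<in> marked_overpartitions"
begin

lemma mf: "is_partition p1" "p1 \<noteq> {#}" "finite p2" "\<forall>x\<in>p2. spart p1 < x" "1 \<le> j"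
  "j \<le> count p1 (spart p1)"
  using mop by (simp_all add: marked_overpartitions_def)

lemma sf: "spart p1 \<in># p1" "\<And>y. y \<in># p1 \<Longrightarrow> spart p1 \<le> y" "spart p1 \<ge> 1"
  using spart_props[OF mf(1,2)] by auto

lemma phi_fst: "fst (Phi (p1,p2,j)) = p1 - replicate_mset (count p1 (spart p1) - j) (spart p1)"
  and phi_snd: "snd (Phi (p1,p2,j)) = replicate_mset (count p1 (spart p1) - j) (spart p1) + S (spart p1) p2"
  by (simp_all add: Phi_def)

lemma l1_count: "count (fst (Phi (p1,p2,j))) y = (if y = spart p1 then j else count p1 y)"
  unfolding phi_fst using mf(6) by auto

lemma l1_spart: "spart (fst (Phi (p1,p2,j))) = spart p1"
proof (rule spart_eqI)
  show "spart p1 \<in># fst (Phi (p1,p2,j))" using l1_count[of "spart p1"] mf(5)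
    by (metis count_eq_zero_iff not_one_le_zero)
  fix y assume "y \<in># fst (Phi (p1,p2,j))"
  then have "y \<in># p1" unfolding phi_fst by (meson in_diffD)
  then show "spart p1 \<le> y" by (rule sf(2))
qed

lemma S_elems: "y \<in># S (spart p1) p2 \<Longrightarrow> G (spart p1) y"
  using in_S[of y "spart p1" p2] base_exists[of "spart p1"] sf(3) mf(4)
  by (metis Suc_eq_plus1 Suc_leI)

lemma phi_SP: "Phi (p1,p2,j) \<in> SPbar"
proof -
  let ?s = "spart p1"
  have l1: "is_partition (fst (Phi (p1,p2,j)))"
    using mf(1) unfolding phi_fst is_partition_def by (meson in_diffD)
  have ne: "fst (Phi (p1,p2,j)) \<noteq> {#}"
    using l1_count[of ?s] mf(5) by (metis count_empty not_one_le_zero)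
  have el2: "y = ?s \<or> G ?s y" if "y \<in># snd (Phi (p1,p2,j))" for y
    using that S_elems unfolding phi_snd by (auto split: if_splits)
  show ?thesis
    unfolding SPbar_def using l1 ne el2 sf(3) l1_spart
    apply (cases "Phi (p1,p2,j)")
    apply (auto simp: is_partition_def G_def)
    by fastforce+
qed

lemma phi_weight: "sp_weight (Phi (p1,p2,j)) = mop_weight (p1,p2,j)"
proof -
  let ?s = "spart p1" let ?c = "count p1 ?s - j"
  have sub: "replicate_mset ?c ?s \<subseteq># p1" by (simp flip: count_le_replicate_mset_subset_eq)
  have "sum_mset p1 = sum_mset (p1 - replicate_mset ?c ?s) + sum_mset (replicate_mset ?c ?s)"
    using sub by (metis subset_mset.diff_add sum_mset.union)
  moreover have "sum_mset (S ?s p2) = \<Sum>p2"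
    unfolding S_def sum_mset_sum
  proof (rule sum.cong)
    fix m assume "m \<in> p2"
    then have "m = base ?s m * 2 ^ ex ?s m" using base_exists[of ?s m] sf(3) mf(4) by auto
    then show "sum_mset (replicate_mset (2 ^ ex ?s m) (base ?s m)) = m" by (simp add: mult.commute)
  qed simp
  ultimately show ?thesis unfolding sp_weight_def mop_weight_def phi_fst phi_snd by simp
qed

lemma phi_ksp: "ksp (Phi (p1,p2,j)) = kbar (p1,p2,j)"
proof -
  let ?s = "spart p1" let ?c = "count p1 ?s - j"
  let ?P = "\<lambda>y. ?s \<le> y \<and> y \<le> 2 * ?s - 1"
  have "size (filter_mset ?P (S ?s p2)) = kset p2 ?s"
    unfolding S_def filter_sum size_sum kset_def
  proof (rule sum.cong)
    fix m assume "m \<in> p2"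
    then have m: "?s + 1 \<le> m" using mf(4) by auto
    have "G ?s (base ?s m)" using base_exists[OF sf(3) m] by simp
    then show "size (filter_mset ?P (replicate_mset (2 ^ ex ?s m) (base ?s m))) = kpart m ?s"
      unfolding kpart_char[OF sf(3) m] filter_rep G_def by auto
  qed simp
  moreover have "?P ?s" using sf(3) by simp
  ultimately show ?thesis
    unfolding ksp_def kbar_def l1_spart phi_snd filter_union_mset size_union filter_rep by simp
qed

lemma phi_crank: "crank_bar (Phi (p1,p2,j)) = sptcrank (p1,p2,j)"
proof -
  let ?s = "spart p1" let ?c = "count p1 ?s - j"
  have k: "ksp (Phi (p1,p2,j)) = kbar (p1,p2,j)" by (rule phi_ksp)
  show ?thesis
  proof (cases "kbar (p1,p2,j) > 0")
    case True
    have "filter_mset (\<lambda>y. ?s + kbar (p1,p2,j) \<le> y) (fst (Phi (p1,p2,j)))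
          = filter_mset (\<lambda>y. ?s + kbar (p1,p2,j) \<le> y) p1"
      by (rule multiset_eqI) (use True in \<open>auto simp: l1_count\<close>)
    then show ?thesis using True unfolding crank_bar_def sptcrank_def k l1_spart Let_def by simp
  next
    case False
    then have "?c = 0" unfolding kbar_def by simp
    then have "fst (Phi (p1,p2,j)) = p1" unfolding phi_fst by simp
    then show ?thesis using False unfolding crank_bar_def sptcrank_def k Let_def by simp
  qed
qed

lemma psi_phi: "Psi (Phi (p1,p2,j)) = (p1,p2,j)"
proof -
  let ?s = "spart p1" let ?c = "count p1 ?s - j"
  obtain l1 l2 where P: "Phi (p1,p2,j) = (l1,l2)" by (cases "Phi (p1,p2,j)")
  have l1: "l1 = p1 - replicate_mset ?c ?s" using phi_fst P by simp
  have l2: "l2 = replicate_mset ?c ?s + S ?s p2" using phi_snd P by simp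
  have sp: "spart l1 = ?s" using l1_spart P by simp
  have nS: "count (S ?s p2) ?s = 0"
    using S_elems[of ?s] by (metis G_def count_eq_zero_iff add_le_same_cancel1 not_one_le_zero)
  have c2: "count l2 ?s = ?c" unfolding l2 using nS by simp
  have e1: "l1 + replicate_mset ?c ?s = p1"
    unfolding l1 by (rule subset_mset.diff_add) (simp flip: count_le_replicate_mset_subset_eq)
  have e3: "count l1 ?s = j" using l1_count[of ?s] P by simp
  have e2: "{m. ?s < m \<and> bit (count l2 (base ?s m)) (ex ?s m)} = p2"
  proof (intro set_eqI iffI)
    fix m assume "m \<in> {m. ?s < m \<and> bit (count l2 (base ?s m)) (ex ?s m)}"
    then have m: "?s < m" "bit (count l2 (base ?s m)) (ex ?s m)" by auto
    have G: "G ?s (base ?s m)" and meq: "m = base ?s m * 2 ^ ex ?s m"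
      using base_exists[of ?s m] m(1) sf(3) by auto
    then have "base ?s m \<noteq> ?s" by (auto simp: G_def)
    then have "count l2 (base ?s m) = (\<Sum>t \<in> ex ?s ` {m'\<in>p2. base ?s m' = base ?s m}. 2^t)"
      unfolding l2 using count_S[OF sf(3) mf(3,4)] by simp
    with m(2) have "ex ?s m \<in> ex ?s ` {m'\<in>p2. base ?s m' = base ?s m}"
      using bit_sum_pow[of "ex ?s ` {m'\<in>p2. base ?s m' = base ?s m}"] mf(3) by simp
    then obtain m' where m': "m' \<in> p2" "base ?s m' = base ?s m" "ex ?s m' = ex ?s m" by auto
    have "m' = base ?s m' * 2 ^ ex ?s m'" using base_exists[of ?s m'] mf(4) m'(1) sf(3) by auto
    then have "m' = m" using m' meq by simp
    then show "m \<in> p2" using m' by simp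
  next
    fix m assume m: "m \<in> p2"
    then have ms: "?s < m" using mf(4) by auto
    have G: "G ?s (base ?s m)" using base_exists[of ?s m] ms sf(3) by auto
    then have "base ?s m \<noteq> ?s" by (auto simp: G_def)
    then have "count l2 (base ?s m) = (\<Sum>t \<in> ex ?s ` {m'\<in>p2. base ?s m' = base ?s m}. 2^t)"
      unfolding l2 using count_S[OF sf(3) mf(3,4)] by simp
    moreover have "ex ?s m \<in> ex ?s ` {m'\<in>p2. base ?s m' = base ?s m}" using m by auto
    ultimately have "bit (count l2 (base ?s m)) (ex ?s m)"
      using bit_sum_pow[of "ex ?s ` {m'\<in>p2. base ?s m' = base ?s m}"] mf(3) by simp
    then show "m \<in> {m. ?s < m \<and> bit (count l2 (base ?s m)) (ex ?s m)}" using ms by simp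
  qed
  show ?thesis unfolding P Psi_def using sp c2 e1 e2 e3 by simp
qed

end



context
  fixes l1 l2 :: "nat multiset"
  assumes sp: "(l1,l2) \<in> SPbar"
begin

lemma spf: "is_partition l1" "is_partition l2" "l1 \<noteq> {#}" "\<forall>y\<in>#l2. spart l1 \<le> y"
  "\<forall>y\<in>#l2. y \<ge> 2 * spart l1 + 1 \<longrightarrow> odd y"
  using sp by (simp_all add: SPbar_def)

lemma sl: "spart l1 \<in># l1" "\<And>y. y \<in># l1 \<Longrightarrow> spart l1 \<le> y" "spart l1 \<ge> 1"
  using spart_props[OF spf(1,3)] by auto

lemma psi_p2_finite:
  "finite {m. spart l1 < m \<and> bit (count l2 (base (spart l1) m)) (ex (spart l1) m)}"
    (is "finite ?A")
proof -
  let ?s = "spart l1"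
  have "?A \<subseteq> (\<lambda>(p,t). p * 2^t) ` (SIGMA p:set_mset l2. {t. bit (count l2 p) t})"
  proof
    fix m assume m: "m \<in> ?A"
    then have "m = base ?s m * 2 ^ ex ?s m" using base_exists[of ?s m] sl(3) by auto
    moreover have "base ?s m \<in># l2"
    proof (rule ccontr)
      assume "\<not> base ?s m \<in># l2"
      then have "count l2 (base ?s m) = 0" by (simp add: count_eq_zero_iff)
      then show False using m by simp
    qed
    ultimately show "m \<in> (\<lambda>(p,t). p * 2^t) ` (SIGMA p:set_mset l2. {t. bit (count l2 p) t})"
      using m by (auto intro!: image_eqI[of _ _ "(base ?s m, ex ?s m)"])
  qed
  moreover have "finite (SIGMA p:set_mset l2. {t. bit (count l2 p) t})"
    by (intro finite_SigmaI bits_finite) simp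
  ultimately show ?thesis using finite_subset by blast
qed

lemma psi_spart: "spart (l1 + replicate_mset (count l2 (spart l1)) (spart l1)) = spart l1"
  by (rule spart_eqI) (use sl in \<open>auto split: if_splits\<close>)

lemma psi_MOP: "Psi (l1,l2) \<in> marked_overpartitions"
proof -
  have "count l1 (spart l1) \<ge> 1" using sl(1) by (simp add: Suc_le_eq)
  then show ?thesis
    unfolding Psi_def marked_overpartitions_def using psi_spart psi_p2_finite spf(1) sl(3)
    by (auto simp: is_partition_def)
qed

lemma phi_psi: "Phi (Psi (l1,l2)) = (l1,l2)"
proof -
  let ?s = "spart l1" let ?c = "count l2 ?s"
  let ?p1 = "l1 + replicate_mset ?c ?s"
  let ?p2 = "{m. ?s < m \<and> bit (count l2 (base ?s m)) (ex ?s m)}"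
  have ps: "Psi (l1,l2) = (?p1, ?p2, count l1 ?s)" by (simp add: Psi_def)
  have mop: "(?p1, ?p2, count l1 ?s) \<in> marked_overpartitions" using psi_MOP ps by simp
  have sp1: "spart ?p1 = ?s" by (rule psi_spart)
  have cnt: "count ?p1 ?s - count l1 ?s = ?c" by simp
  have A: "fst (Phi (?p1, ?p2, count l1 ?s)) = l1"
    unfolding phi_fst[OF mop] sp1 cnt by simp
  have B: "snd (Phi (?p1, ?p2, count l1 ?s)) = l2"
    unfolding phi_snd[OF mop] sp1 cnt
  proof (rule multiset_eqI)
    fix y
    have cS: "count (S ?s ?p2) y = (\<Sum>t \<in> ex ?s ` {m\<in>?p2. base ?s m = y}. 2^t)"
      by (rule count_S[OF sl(3) psi_p2_finite]) simp
    show "count (replicate_mset ?c ?s + S ?s ?p2) y = count l2 y"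
    proof (cases "G ?s y")
      case False
      have "{m\<in>?p2. base ?s m = y} = {}"
        using base_exists[of ?s] sl(3) False by (auto simp: Suc_le_eq)
      then have z: "count (S ?s ?p2) y = 0" using cS by (simp only: image_empty sum.empty)
      have "y \<noteq> ?s \<Longrightarrow> count l2 y = 0"
      proof (rule ccontr)
        assume "y \<noteq> ?s" "count l2 y \<noteq> 0"
        then have "y \<in># l2" by (simp add: count_eq_zero_iff)
        then have "?s \<le> y" "y \<ge> 2 * ?s + 1 \<longrightarrow> odd y" using spf(4,5) by auto
        then show False using False \<open>y \<noteq> ?s\<close> by (auto simp: G_def)
      qed
      then show ?thesis using z by auto
    next
      case True
      then have ys: "y \<noteq> ?s" by (auto simp: G_def)
      have "ex ?s ` {m\<in>?p2. base ?s m = y} = {t. bit (count l2 y) t}"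
      proof (intro set_eqI iffI)
        fix t assume "t \<in> ex ?s ` {m\<in>?p2. base ?s m = y}"
        then show "t \<in> {t. bit (count l2 y) t}" by auto
      next
        fix t assume t: "t \<in> {t. bit (count l2 y) t}"
        have bc: "base ?s (y*2^t) = y" "ex ?s (y*2^t) = t" using base_char[OF True] by auto
        have "y \<le> y*2^t" by simp
        moreover have "?s < y" using True by (simp add: G_def)
        ultimately have "?s < y*2^t" by (rule order_less_le_trans[rotated])
        then have "y*2^t \<in> {m\<in>?p2. base ?s m = y}" using bc t by simp
        then show "t \<in> ex ?s ` {m\<in>?p2. base ?s m = y}" using bc(2) by (intro image_eqI[where x="y*2^t"]) auto
      qed
      then have "count (S ?s ?p2) y = count l2 y" using cS sum_bits by simp
      then show ?thesis using ys by simp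
    qed
  qed
  show ?thesis using A B ps by (metis prod.collapse)
qed

end

theorem mainTheorem16:
  shows "\<exists>\<Phi>. bij_betw \<Phi> marked_overpartitions SPbar \<and>
    (\<forall>x\<in>marked_overpartitions.
       sp_weight (\<Phi> x) = mop_weight x \<and>
       kbar x = ksp (\<Phi> x) \<and>
       sptcrank x = crank_bar (\<Phi> x))"
proof (intro exI conjI ballI)
  show "bij_betw Phi marked_overpartitions SPbar"
  proof (rule bij_betw_byWitness[where f' = Psi])
    show "\<forall>a\<in>marked_overpartitions. Psi (Phi a) = a" using psi_phi by auto
    show "\<forall>a\<in>SPbar. Phi (Psi a) = a" using phi_psi by auto
    show "Phi ` marked_overpartitions \<subseteq> SPbar" using phi_SP by auto
    show "Psi ` SPbar \<subseteq> marked_overpartitions" using psi_MOP by auto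
  qed
next
  fix x assume "x \<in> marked_overpartitions"
  then obtain p1 p2 j where x: "x = (p1,p2,j)" "(p1,p2,j) \<in> marked_overpartitions"
    by (metis prod_cases3)
  show "sp_weight (Phi x) = mop_weight x" using phi_weight[OF x(2)] x(1) by simp
  show "kbar x = ksp (Phi x)" using phi_ksp[OF x(2)] x(1) by simp
  show "sptcrank x = crank_bar (Phi x)" using phi_crank[OF x(2)] x(1) by simp
qed


end
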